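(* Let $t>0$ and $\tau=t/2\pi\ge648$. Then \[ \Bigl|\sum_{n\le(t/2\pi)^{1/2}}\frac{1}{n^{1/2+it}}\Bigr|\le 1.89725\,\tau^{1/6}\log\tau+9.89044\,\tau^{1/6}. \]
   Context: The sum runs over positive integers $n$. *)

theory Defs
  imports "HOL-Analysis.Analysis"
begin

end

theory Submission
  imports Defs
begin

lemma sin_half_lower:
  fixes x :: real assumes "0 \<le> x" "x \<le> 1" shows "x/2 \<le> sin x"
proof (cases "x = 0")
  case True then show ?thesis by simp
next
  case False
  then have "0 < x" using assms by simp
  have "\<exists>z. 0 < z \<and> z < x \<and> (sin x - x/2) - (sin 0 - 0/2) = (x - 0) * (cos z - 1/2)"
    by (rule MVT2[OF \<open>0 < x\<close>]) (auto intro!: derivative_eq_intros)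
  then obtain z where z: "0 < z" "z < x" "sin x - x/2 - (sin 0 - 0/2) = (x - 0) * (cos z - 1/2)"
    by blast
  have "pi/3 \<ge> 1" using pi_gt3 by simp
  then have "cos (pi/3) \<le> cos z"
    using z assms by (intro cos_monotone_0_pi_le) auto
  then have "cos z \<ge> 1/2" by (simp add: cos_60)
  then have "x * (cos z - 1/2) \<ge> 0" using \<open>0 < x\<close> by simp
  then show ?thesis using z by simp
qed

lemma sin_mid_lower:
  fixes a th :: real
  assumes "0 < a" "a \<le> pi/2" "a \<le> th" "th \<le> pi - a"
  shows "sin a \<le> sin th"
proof (cases "th \<le> pi/2")
  case True then show ?thesis using assms by (intro sin_monotone_2pi_le) auto
next
  case False
  have "sin a \<le> sin (pi - th)" using assms False by (intro sin_monotone_2pi_le) auto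
  then show ?thesis by simp
qed

lemma cot_anti:
  fixes x y :: real
  assumes "0 < x" "x \<le> y" "y < pi"
  shows "cos y / sin y \<le> cos x / sin x"
proof -
  have sx: "sin x > 0" using assms by (intro sin_gt_zero) auto
  have sy: "sin y > 0" using assms by (intro sin_gt_zero) auto
  have "sin (y - x) \<ge> 0" using assms by (intro sin_ge_zero) auto
  then have "cos y * sin x \<le> cos x * sin y" by (simp add: sin_diff algebra_simps)
  then show ?thesis using sx sy by (simp add: divide_simps mult.commute)
qed

lemma sbp:
  fixes c w :: "nat \<Rightarrow> 'a::comm_ring"
  assumes "a \<le> b"
  shows "(\<Sum>n=a..b. c n * (w (Suc n) - w n)) = c b * w (Suc b) - c a * w a - (\<Sum>n=Suc a..b. (c n - c (n-1)) * w n)"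
  using assms
proof (induct b rule: dec_induct)
  case base then show ?case by (simp add: algebra_simps)
next
  case (step n)
  have e: "{Suc a..Suc n} = insert (Suc n) {Suc a..n}" using step by auto
  show ?case using step by (simp add: e algebra_simps)
qed

lemma tele:
  fixes x :: "nat \<Rightarrow> real"
  assumes "a \<le> b"
  shows "(\<Sum>n=Suc a..b. x (n-1) - x n) = x a - x b"
  using assms
proof (induct b rule: dec_induct)
  case base then show ?case by simp
next
  case (step n)
  have e: "{Suc a..Suc n} = insert (Suc n) {Suc a..n}" using step by auto
  show ?case using step by (simp add: e)
qed

lemma KL:
  fixes u :: "nat \<Rightarrow> real" and k :: int
  assumes ab: "a \<le> b" and eta: "0 < \<eta>" "\<eta> \<le> 1"
    and rng: "\<And>n. a \<le> n \<Longrightarrow> n \<le> b \<Longrightarrow> 2*pi*k + \<eta> \<le> u (Suc n) - u n \<and> u (Suc n) - u n \<le> 2*pi*k + 2*pi - \<eta>"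
    and mono: "\<And>n. a \<le> n \<Longrightarrow> n < b \<Longrightarrow> u (Suc n) - u n \<le> u (Suc (Suc n)) - u (Suc n)"
  shows "cmod (\<Sum>n=a..b. cis (u n)) \<le> 8/\<eta>"
proof -
  define th where "th n = (u (Suc n) - u n - 2*pi*k)/2" for n
  have thr: "\<eta>/2 \<le> th n \<and> th n \<le> pi - \<eta>/2" if "a \<le> n" "n \<le> b" for n
    using rng[OF that] by (simp add: th_def field_simps)
  have sinpos: "sin (th n) > 0" if "a \<le> n" "n \<le> b" for n
    using thr[OF that] eta by (intro sin_gt_zero) auto
  have sinlow: "\<eta>/4 \<le> sin (th n)" if "a \<le> n" "n \<le> b" for n
  proof -
    have "\<eta>/4 \<le> sin (\<eta>/2)" using sin_half_lower[of "\<eta>/2"] eta by simp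
    also have "\<dots> \<le> sin (th n)" using thr[OF that] eta pi_gt3 by (intro sin_mid_lower) auto
    finally show ?thesis .
  qed
  define ct where "ct n = cos (th n) / sin (th n)" for n
  define c where "c n = - 1/2 - \<i> * complex_of_real (ct n / 2)" for n
  define w where "w n = cis (u n)" for n
  have key: "w n = c n * (w (Suc n) - w n)" if "a \<le> n" "n \<le> b" for n
  proof -
    have "u (Suc n) = u n + 2 * th n + 2*pi*k" by (simp add: th_def field_simps)
    then have "w (Suc n) = w n * cis (2 * th n)"
      by (simp add: w_def cis_mult[symmetric] del: cis_mult)
    then have e: "w (Suc n) - w n = w n * (cis (2 * th n) - 1)" by (simp add: algebra_simps)
    have s: "sin (th n) \<noteq> 0" using sinpos[OF that] by simp
    have "c n * (cis (2 * th n) - 1) = 1"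
    proof -
      define x where "x = th n"
      have s2: "sin (2*x) = 2 * sin x * cos x" by (rule sin_double)
      have c2: "cos (2*x) = (cos x)^2 - (sin x)^2" by (rule cos_double)
      have p: "(sin x)^2 + (cos x)^2 = 1" by simp
      have sx: "sin x \<noteq> 0" using s by (simp add: x_def)
      show ?thesis unfolding c_def ct_def x_def[symmetric] cis.code complex_eq_iff
        using sx s2 c2 by (simp add: field_simps power2_eq_square) (use p in algebra)
    qed
    moreover have "c n * (w (Suc n) - w n) = w n * (c n * (cis (2 * th n) - 1))"
      unfolding e by (simp only: mult.assoc mult.left_commute)
    ultimately show ?thesis by simp
  qed
  have cn: "cmod (c n) = 1 / (2 * sin (th n))" if "a \<le> n" "n \<le> b" for n
  proof -
    have s: "sin (th n) > 0" using sinpos[OF that] .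
    have "(cmod (c n))^2 = 1/4 + (ct n)^2/4" unfolding cmod_power2 by (simp add: c_def power2_eq_square)
    also have "\<dots> = (1 / (2 * sin (th n)))^2" using s
      by (simp add: ct_def field_simps power2_eq_square)
    finally show ?thesis using s by (simp add: power2_eq_iff_nonneg)
  qed
  have cb: "cmod (c n) \<le> 2/\<eta>" if "a \<le> n" "n \<le> b" for n
  proof -
    have "1 / (2 * sin (th n)) \<le> 1 / (2 * (\<eta>/4))"
      using sinlow[OF that] eta by (intro divide_left_mono) auto
    then show ?thesis using cn[OF that] by simp
  qed
  have ctb: "\<bar>ct n\<bar> \<le> 4/\<eta>" if "a \<le> n" "n \<le> b" for n
  proof -
    have "\<bar>ct n\<bar>/2 = \<bar>Im (c n)\<bar>" by (simp add: c_def)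
    also have "\<dots> \<le> cmod (c n)" by (rule abs_Im_le_cmod)
    finally show ?thesis using cb[OF that] by simp
  qed
  have ctmono: "ct n \<le> ct (n-1)" if "Suc a \<le> n" "n \<le> b" for n
  proof -
    have m: "u (Suc (n-1)) - u (n-1) \<le> u (Suc (Suc (n-1))) - u (Suc (n-1))"
      using that by (intro mono) auto
    have sn: "Suc (n-1) = n" using that by simp
    have "th (n-1) \<le> th n" using m unfolding th_def sn by simp
    moreover have "0 < th (n-1)" using thr[of "n-1"] that eta by fastforce
    moreover have "th n < pi" using thr[of n] that eta by fastforce
    ultimately show ?thesis unfolding ct_def by (intro cot_anti)
  qed
  have "(\<Sum>n=a..b. w n) = (\<Sum>n=a..b. c n * (w (Suc n) - w n))"
    using key by (intro sum.cong) auto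
  also have "\<dots> = c b * w (Suc b) - c a * w a - (\<Sum>n=Suc a..b. (c n - c (n-1)) * w n)"
    by (rule sbp[OF ab])
  finally have eq: "(\<Sum>n=a..b. w n) = \<dots>" .
  have "cmod (\<Sum>n=Suc a..b. (c n - c (n-1)) * w n) \<le> (\<Sum>n=Suc a..b. cmod ((c n - c (n-1)) * w n))"
    by (rule norm_sum)
  also have "\<dots> = (\<Sum>n=Suc a..b. (ct (n-1) - ct n)/2)"
  proof (intro sum.cong refl)
    fix n assume n: "n \<in> {Suc a..b}"
    have "c n - c (n-1) = - \<i> * complex_of_real ((ct n - ct (n-1))/2)"
      by (simp add: c_def algebra_simps diff_divide_distrib)
    then have "cmod (c n - c (n-1)) = cmod (complex_of_real ((ct n - ct (n-1))/2))"
      by (simp only: norm_mult norm_minus_cancel norm_ii mult_1 mult_minus_left)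
    also have "\<dots> = \<bar>(ct n - ct (n-1))/2\<bar>" by (rule norm_of_real)
    also have "\<dots> = (ct (n-1) - ct n)/2" using ctmono[of n] n by auto
    finally have "cmod (c n - c (n-1)) = (ct (n-1) - ct n)/2" .
    then show "cmod ((c n - c (n-1)) * w n) = (ct (n-1) - ct n)/2" by (simp add: norm_mult w_def)
  qed
  also have "\<dots> = (ct a - ct b)/2"
    using tele[OF ab, of ct] by (simp add: sum_divide_distrib[symmetric])
  also have "\<dots> \<le> 4/\<eta>" using ctb[of a] ctb[of b] ab by auto
  finally have t3: "cmod (\<Sum>n=Suc a..b. (c n - c (n-1)) * w n) \<le> 4/\<eta>" .
  have "cmod (\<Sum>n=a..b. w n) \<le> cmod (c b * w (Suc b)) + cmod (c a * w a) + cmod (\<Sum>n=Suc a..b. (c n - c (n-1)) * w n)"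
    unfolding eq by (rule order_trans[OF norm_triangle_ineq4 add_right_mono[OF norm_triangle_ineq4]])
  also have "\<dots> \<le> 2/\<eta> + 2/\<eta> + 4/\<eta>"
    using cb[of b] cb[of a] ab t3 by (intro add_mono) (auto simp: norm_mult w_def)
  finally show ?thesis by (simp add: w_def)
qed

lemma sdt:
  fixes u :: "nat \<Rightarrow> real"
  assumes AB: "A \<le> B" and lam: "0 < lm" "lm \<le> LM" and eta: "0 < \<eta>" "\<eta> \<le> 1"
    and d2: "\<And>n. A \<le> n \<Longrightarrow> n + 2 \<le> B \<Longrightarrow> lm \<le> u (n+2) - 2 * u (n+1) + u n \<and> u (n+2) - 2 * u (n+1) + u n \<le> LM"
  shows "cmod (\<Sum>n=A..B. cis (u n)) \<le> 1 + (real (B - A) * LM / (2*pi) + 2) * (2*\<eta>/lm + 1 + 8/\<eta>)"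
proof (cases "A = B")
  case True
  have "0 \<le> (real (B - A) * LM / (2*pi) + 2) * (2*\<eta>/lm + 1 + 8/\<eta>)"
    using lam eta by (intro mult_nonneg_nonneg add_nonneg_nonneg) auto
  then show ?thesis using True by simp
next
  case False
  then have AB': "A < B" using AB by simp
  define D where "D n = u (Suc n) - u n" for n
  have stp: "lm \<le> D (Suc m) - D m \<and> D (Suc m) - D m \<le> LM" if "A \<le> m" "Suc m < B" for m
    using d2[of m] that by (simp add: D_def algebra_simps numeral_2_eq_2)
  have Dinc: "real (m - n) * lm \<le> D m - D n \<and> D m - D n \<le> real (m - n) * LM"
    if "A \<le> n" "n \<le> m" "m < B" for n m
    using that(2,3)
  proof (induct m rule: dec_induct)
    case base then show ?case by simp
  next
    case (step m)
    have s: "lm \<le> D (Suc m) - D m \<and> D (Suc m) - D m \<le> LM"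
      using stp[of m] step that by simp
    have "real (Suc m - n) = real (m - n) + 1" using step by simp
    then show ?case using step s by (simp add: algebra_simps)
  qed
  have Dmono: "D n \<le> D m" if "A \<le> n" "n \<le> m" "m < B" for n m
    using Dinc[OF that] lam by (smt (verit) mult_nonneg_nonneg of_nat_0_le_iff)
  define I where "I = {A..<B}"
  define kf where "kf n = \<lfloor>(D n + \<eta>) / (2*pi)\<rfloor>" for n
  define Q where "Q = 2*\<eta>/lm + 1 + 8/\<eta>"
  have fin: "finite I" by (simp add: I_def)
  have fiber: "cmod (\<Sum>n\<in>{n\<in>I. kf n = k}. cis (u n)) \<le> Q" for k
  proof -
    define F where "F = {n\<in>I. kf n = k}"
    define N where "N = {n\<in>F. D n < 2*pi*k + \<eta>}"
    define G where "G = {n\<in>F. \<not> D n < 2*pi*k + \<eta>}"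
    have finF: "finite F" using fin by (simp add: F_def)
    have FNG: "F = N \<union> G" "N \<inter> G = {}" by (auto simp: N_def G_def)
    have finN: "finite N" "finite G" using finF by (auto simp: N_def G_def)
    have lowk: "2*pi*k - \<eta> \<le> D n \<and> D n < 2*pi*k + 2*pi - \<eta>" if "n \<in> F" for n
    proof -
      have "kf n = k" using that by (simp add: F_def)
      then have "k \<le> (D n + \<eta>)/(2*pi)" "(D n + \<eta>)/(2*pi) < k + 1" unfolding kf_def
        by linarith+
      then show ?thesis using pi_gt_zero by (simp add: field_simps)
    qed
    have cardN: "real (card N) \<le> 2*\<eta>/lm + 1"
    proof (cases "N = {}")
      case True then show ?thesis using lam eta by simp
    next
      case False
      define n0 where "n0 = Min N"
      have n0N: "n0 \<in> N" using False finN by (simp add: n0_def)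
      have sub: "N \<subseteq> {n0..<n0 + nat \<lceil>2*\<eta>/lm\<rceil>}"
      proof
        fix n assume nN: "n \<in> N"
        have le: "n0 \<le> n" using nN finN by (simp add: n0_def)
        have inI: "A \<le> n0" "n < B" using nN n0N by (auto simp: N_def F_def I_def)
        have "real (n - n0) * lm \<le> D n - D n0" using Dinc[OF inI(1) le inI(2)] by simp
        also have "\<dots> < 2*\<eta>" using lowk[of n0] nN n0N by (auto simp: N_def)
        finally have "real (n - n0) < 2*\<eta>/lm" using lam by (simp add: field_simps)
        then have "real (n - n0) < real (nat \<lceil>2*\<eta>/lm\<rceil>)" by linarith
        then show "n \<in> {n0..<n0 + nat \<lceil>2*\<eta>/lm\<rceil>}" using le by simp
      qed
      have "card N \<le> nat \<lceil>2*\<eta>/lm\<rceil>" using card_mono[OF _ sub] by simp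
      then have "real (card N) \<le> real (nat \<lceil>2*\<eta>/lm\<rceil>)" by linarith
      also have "\<dots> \<le> 2*\<eta>/lm + 1"
      proof -
        have "0 \<le> 2*\<eta>/lm" using lam eta by simp
        then have "real (nat \<lceil>2*\<eta>/lm\<rceil>) = of_int \<lceil>2*\<eta>/lm\<rceil>" by simp
        then show ?thesis using of_int_ceiling_le_add_one[of "2*\<eta>/lm"] by linarith
      qed
      finally show ?thesis .
    qed
    have sumG: "cmod (\<Sum>n\<in>G. cis (u n)) \<le> 8/\<eta>"
    proof (cases "G = {}")
      case True then show ?thesis using eta by simp
    next
      case False
      define a where "a = Min G"
      define b where "b = Max G"
      have aG: "a \<in> G" and bG: "b \<in> G" using False finN by (auto simp: a_def b_def)
      have ab: "a \<le> b" using aG finN by (simp add: b_def)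
      have GI: "A \<le> n \<and> n < B" if "n \<in> G" for n using that by (auto simp: G_def F_def I_def)
      have Geq: "G = {a..b}"
      proof
        show "G \<subseteq> {a..b}" using finN by (auto simp: a_def b_def)
      next
        show "{a..b} \<subseteq> G"
        proof
          fix m assume m: "m \<in> {a..b}"
          have mI: "A \<le> m" "m < B" using GI[OF aG] GI[OF bG] m by auto
          have Da: "D a \<le> D m" using Dmono[of a m] GI[OF aG] m mI by auto
          have Db: "D m \<le> D b" using Dmono[of m b] GI[OF bG] m mI by auto
          have ka: "kf a = k" and kb: "kf b = k" using aG bG by (auto simp: G_def F_def)
          have "kf a \<le> kf m" unfolding kf_def using Da pi_gt_zero
            by (intro floor_mono divide_right_mono) auto
          moreover have "kf m \<le> kf b" unfolding kf_def using Db pi_gt_zero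
            by (intro floor_mono divide_right_mono) auto
          ultimately have km: "kf m = k" using ka kb by simp
          have "2*pi*k + \<eta> \<le> D m" using aG Da by (auto simp: G_def)
          then show "m \<in> G" using km mI by (auto simp: G_def F_def I_def)
        qed
      qed
      have "cmod (\<Sum>n=a..b. cis (u n)) \<le> 8/\<eta>"
      proof (rule KL[OF ab eta, of k])
        fix n assume n: "a \<le> n" "n \<le> b"
        then have nG: "n \<in> G" using Geq by auto
        then have nF: "n \<in> F" by (simp add: G_def)
        show "2*pi*k + \<eta> \<le> u (Suc n) - u n \<and> u (Suc n) - u n \<le> 2*pi*k + 2*pi - \<eta>"
          using nG lowk[OF nF] by (auto simp: G_def D_def)
      next
        fix n assume n: "a \<le> n" "n < b"
        have "D n \<le> D (Suc n)" using Dmono[of n "Suc n"] GI[OF aG] GI[OF bG] n by auto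
        then show "u (Suc n) - u n \<le> u (Suc (Suc n)) - u (Suc n)" by (simp add: D_def)
      qed
      then show ?thesis using Geq by simp
    qed
    have "(\<Sum>n\<in>F. cis (u n)) = (\<Sum>n\<in>N. cis (u n)) + (\<Sum>n\<in>G. cis (u n))"
      unfolding FNG(1) by (rule sum.union_disjoint[OF finN FNG(2)])
    then have "cmod (\<Sum>n\<in>F. cis (u n)) \<le> cmod (\<Sum>n\<in>N. cis (u n)) + cmod (\<Sum>n\<in>G. cis (u n))"
      by (simp add: norm_triangle_ineq)
    also have "cmod (\<Sum>n\<in>N. cis (u n)) \<le> real (card N)"
      using norm_sum[of "\<lambda>n. cis (u n)" N] by simp
    finally have "cmod (\<Sum>n\<in>F. cis (u n)) \<le> real (card N) + cmod (\<Sum>n\<in>G. cis (u n))" by simp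
    then show ?thesis using cardN sumG unfolding Q_def F_def by linarith
  qed
  have kfmono: "kf n \<le> kf m" if "A \<le> n" "n \<le> m" "m < B" for n m
    unfolding kf_def using Dmono[OF that] pi_gt_zero by (intro floor_mono divide_right_mono) auto
  have img: "kf ` I \<subseteq> {kf A..kf (B-1)}"
    using kfmono AB' by (auto simp: I_def)
  have "card (kf ` I) \<le> card {kf A..kf (B-1)}" by (rule card_mono[OF _ img]) simp
  also have "\<dots> = nat (kf (B-1) - kf A + 1)" by simp
  finally have cc: "card (kf ` I) \<le> nat (kf (B-1) - kf A + 1)" .
  have ge: "kf A \<le> kf (B-1)" using kfmono[of A "B-1"] AB' by simp
  have "int (card (kf ` I)) \<le> kf (B-1) - kf A + 1" using cc ge by (simp add: le_nat_iff)
  then have c1: "real (card (kf ` I)) \<le> real_of_int (kf (B-1) - kf A + 1)"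
    by (metis of_int_le_iff of_int_of_nat_eq)
  have "real_of_int (kf (B-1) - kf A) < (D (B-1) - D A)/(2*pi) + 1"
  proof -
    have "real_of_int (kf (B-1)) \<le> (D (B-1) + \<eta>)/(2*pi)" unfolding kf_def by linarith
    moreover have "(D A + \<eta>)/(2*pi) < real_of_int (kf A) + 1" unfolding kf_def by linarith
    ultimately show ?thesis by (simp add: diff_divide_distrib add_divide_distrib)
  qed
  also have "(D (B-1) - D A) \<le> real (B - 1 - A) * LM" using Dinc[of A "B-1"] AB' by simp
  also have "real (B - 1 - A) * LM \<le> real (B - A) * LM" using lam by (intro mult_right_mono) auto
  finally have c2: "real (card (kf ` I)) \<le> real (B - A) * LM / (2*pi) + 2"
    using c1 pi_gt_zero by (simp add: divide_right_mono) 
  have split: "{A..B} = insert B I" using AB by (auto simp: I_def)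
  have "(\<Sum>n=A..B. cis (u n)) = cis (u B) + (\<Sum>n\<in>I. cis (u n))"
    unfolding split by (simp add: I_def)
  also have "(\<Sum>n\<in>I. cis (u n)) = (\<Sum>k\<in>kf ` I. \<Sum>n\<in>{n\<in>I. kf n = k}. cis (u n))"
    by (rule sum.image_gen[OF fin])
  finally have "cmod (\<Sum>n=A..B. cis (u n)) \<le> 1 + cmod (\<Sum>k\<in>kf ` I. \<Sum>n\<in>{n\<in>I. kf n = k}. cis (u n))"
    by (metis norm_cis norm_triangle_ineq)
  also have "cmod (\<Sum>k\<in>kf ` I. \<Sum>n\<in>{n\<in>I. kf n = k}. cis (u n)) \<le> (\<Sum>k\<in>kf ` I. Q)"
    by (rule order_trans[OF norm_sum sum_mono[OF fiber]])
  also have "\<dots> = real (card (kf ` I)) * Q" by simp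
  also have "\<dots> \<le> (real (B - A) * LM / (2*pi) + 2) * Q"
    using c2 lam eta by (intro mult_right_mono) (auto simp: Q_def)
  finally show ?thesis by (simp add: Q_def)
qed

lemma sum_shift_int:
  fixes f :: "int \<Rightarrow> 'a::comm_monoid_add"
  shows "(\<Sum>m\<in>{p..q}. f (m + c)) = (\<Sum>j\<in>{p+c..q+c}. f j)"
  by (rule sum.reindex_bij_witness[of _ "\<lambda>j. j - c" "\<lambda>m. m + c"]) auto

lemma sum_pad_int:
  fixes g :: "int \<Rightarrow> 'a::comm_monoid_add"
  assumes "p \<le> a" "b \<le> q" "\<And>j. j < a \<or> b < j \<Longrightarrow> g j = 0"
  shows "(\<Sum>j\<in>{p..q}. g j) = (\<Sum>j\<in>{a..b}. g j)"
  using assms by (intro sum.mono_neutral_right) auto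

lemma sum_nat_int:
  fixes f :: "int \<Rightarrow> 'a::comm_monoid_add"
  shows "(\<Sum>j\<in>{int A..int B}. f j) = (\<Sum>n\<in>{A..B}. f (int n))"
  by (rule sum.reindex_bij_witness[of _ "\<lambda>n. int n" "\<lambda>j. nat j"]) auto

lemma dist_sum_bound:
  fixes g :: "nat \<Rightarrow> real"
  assumes g0: "\<And>h. 0 \<le> g h" and r: "r < H"
  shows "(\<Sum>s<H. (if s \<le> r then g (r - s) else g (s - r))) \<le> g 0 + 2 * (\<Sum>h=1..<H. g h)"
proof -
  have sp: "{..<H} = {..r} \<union> {r<..<H}" using r by auto
  have "(\<Sum>s<H. (if s \<le> r then g (r - s) else g (s - r)))
      = (\<Sum>s\<in>{..r}. (if s \<le> r then g (r - s) else g (s - r))) + (\<Sum>s\<in>{r<..<H}. (if s \<le> r then g (r - s) else g (s - r)))"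
    unfolding sp by (rule sum.union_disjoint) auto
  also have "(\<Sum>s\<in>{..r}. (if s \<le> r then g (r - s) else g (s - r))) = (\<Sum>s\<in>{..r}. g (r - s))"
    by (intro sum.cong) auto
  also have "\<dots> = (\<Sum>h\<in>(\<lambda>s. r - s) ` {..r}. g h)"
    by (rule sum.reindex[symmetric, unfolded comp_def]) (auto simp: inj_on_def)
  also have "\<dots> \<le> (\<Sum>h\<in>{..<H}. g h)"
    using r g0 by (intro sum_mono2) auto
  also have "(\<Sum>s\<in>{r<..<H}. (if s \<le> r then g (r - s) else g (s - r))) = (\<Sum>s\<in>{r<..<H}. g (s - r))"
    by (intro sum.cong) auto
  also have "\<dots> = (\<Sum>h\<in>(\<lambda>s. s - r) ` {r<..<H}. g h)"
    by (rule sum.reindex[symmetric, unfolded comp_def]) (auto simp: inj_on_def)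
  also have "\<dots> \<le> (\<Sum>h\<in>{1..<H}. g h)"
    using r g0 by (intro sum_mono2) auto
  also have "(\<Sum>h\<in>{..<H}. g h) = g 0 + (\<Sum>h\<in>{1..<H}. g h)"
  proof -
    have "{..<H} = insert 0 {1..<H}" using r by auto
    then show ?thesis by simp
  qed
  finally show ?thesis by simp
qed

lemma weyl:
  fixes z :: "nat \<Rightarrow> complex" and A B H :: nat
  assumes AB: "A \<le> B" and H: "1 \<le> H" and z1: "\<And>n. cmod (z n) = 1"
  shows "(cmod (\<Sum>n=A..B. z n))^2 \<le> real (B - A + H) / real H *
     (real (B - A + 1) + 2 * (\<Sum>h=1..<H. cmod (\<Sum>n\<in>{n. A \<le> n \<and> n + h \<le> B}. z (n+h) * cnj (z n))))"
proof -
  define a where "a = int A"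
  define b where "b = int B"
  define w where "w j = (if a \<le> j \<and> j \<le> b then z (nat j) else 0)" for j
  have w0: "w j = 0" if "j < a \<or> b < j" for j using that by (auto simp: w_def)
  define Ms where "Ms = {a - int H + 1 .. b}"
  define S where "S = (\<Sum>n=A..B. z n)"
  have Sw: "S = (\<Sum>j\<in>{a..b}. w j)"
    unfolding S_def a_def b_def sum_nat_int by (intro sum.cong) (auto simp: w_def a_def b_def)
  have win: "(\<Sum>m\<in>Ms. w (m + int r)) = S" if "r < H" for r
  proof -
    have "(\<Sum>m\<in>Ms. w (m + int r)) = (\<Sum>j\<in>{a - int H + 1 + int r..b + int r}. w j)"
      unfolding Ms_def by (rule sum_shift_int)
    also have "\<dots> = (\<Sum>j\<in>{a..b}. w j)" using that w0 by (intro sum_pad_int) auto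
    finally show ?thesis using Sw by simp
  qed
  define V where "V m = (\<Sum>r<H. w (m + int r))" for m
  have HS: "of_nat H * S = (\<Sum>m\<in>Ms. V m)"
  proof -
    have "of_nat H * S = (\<Sum>r<H. S)" by simp
    also have "\<dots> = (\<Sum>r<H. \<Sum>m\<in>Ms. w (m + int r))" using win by simp
    also have "\<dots> = (\<Sum>m\<in>Ms. V m)" unfolding V_def by (rule sum.swap)
    finally show ?thesis .
  qed
  have cardMs: "card Ms = B - A + H" using AB H by (simp add: Ms_def a_def b_def)
  have "(cmod (of_nat H * S))^2 \<le> (\<Sum>m\<in>Ms. cmod (V m))^2"
    unfolding HS by (intro power_mono norm_sum) auto
  also have "\<dots> \<le> (\<Sum>m\<in>Ms. (cmod (V m))^2) * card Ms" by (rule sum_squared_le_sum_of_squares)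
  finally have cs: "(cmod (of_nat H * S))^2 \<le> (\<Sum>m\<in>Ms. (cmod (V m))^2) * real (B - A + H)"
    using cardMs by simp
  define T where "T r s = (\<Sum>m\<in>Ms. w (m + int r) * cnj (w (m + int s)))" for r s :: nat
  have sq: "complex_of_real ((cmod (V m))^2) = (\<Sum>r<H. \<Sum>s<H. w (m + int r) * cnj (w (m + int s)))" for m
    unfolding complex_norm_square V_def by (simp add: sum_product cnj_sum)
  have "complex_of_real (\<Sum>m\<in>Ms. (cmod (V m))^2) = (\<Sum>r<H. \<Sum>s<H. T r s)"
    unfolding of_real_sum sq T_def
    by (subst sum.swap) (simp add: sum.swap[of _ Ms])
  then have "(\<Sum>m\<in>Ms. (cmod (V m))^2) = Re (\<Sum>r<H. \<Sum>s<H. T r s)"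
    by (metis Re_complex_of_real)
  also have "\<dots> \<le> cmod (\<Sum>r<H. \<Sum>s<H. T r s)" by (rule complex_Re_le_cmod)
  also have "\<dots> \<le> (\<Sum>r<H. \<Sum>s<H. cmod (T r s))"
    by (rule order_trans[OF norm_sum sum_mono[OF norm_sum]])
  finally have sumV: "(\<Sum>m\<in>Ms. (cmod (V m))^2) \<le> (\<Sum>r<H. \<Sum>s<H. cmod (T r s))" .
  define C where "C h = (\<Sum>n\<in>{n. A \<le> n \<and> n + h \<le> B}. z (n+h) * cnj (z n))" for h
  have Tsym: "T s r = cnj (T r s)" for r s by (simp add: T_def cnj_sum mult.commute)
  have TC: "T r s = C (r - s)" if "s \<le> r" "r < H" "s < H" for r s
  proof -
    define d where "d = r - s"
    have "T r s = (\<Sum>m\<in>Ms. w (m + int s + int d) * cnj (w (m + int s)))"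
      unfolding T_def d_def using that by (intro sum.cong) (auto simp: algebra_simps)
    also have "\<dots> = (\<Sum>j\<in>{a - int H + 1 + int s..b + int s}. w (j + int d) * cnj (w j))"
      unfolding Ms_def by (rule sum_shift_int[where f = "\<lambda>j. w (j + int d) * cnj (w j)"])
    also have "\<dots> = (\<Sum>j\<in>{a..b}. w (j + int d) * cnj (w j))"
      using that w0 by (intro sum_pad_int) auto
    also have "\<dots> = (\<Sum>n\<in>{A..B}. w (int n + int d) * cnj (w (int n)))"
      unfolding a_def b_def by (rule sum_nat_int)
    also have "\<dots> = (\<Sum>n\<in>{A..B}. if n + d \<le> B then z (n + d) * cnj (z n) else 0)"
      by (intro sum.cong) (auto simp: w_def a_def b_def nat_add_distrib)
    also have "\<dots> = (\<Sum>n\<in>{n\<in>{A..B}. n + d \<le> B}. z (n + d) * cnj (z n))"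
      by (rule sum.inter_filter[symmetric]) simp
    also have "{n\<in>{A..B}. n + d \<le> B} = {n. A \<le> n \<and> n + d \<le> B}" by auto
    finally show ?thesis by (simp add: C_def d_def)
  qed
  have C0: "cmod (C 0) = real (B - A + 1)"
  proof -
    have "C 0 = (\<Sum>n\<in>{A..B}. 1)"
      unfolding C_def
    proof (intro sum.cong)
      show "{n. A \<le> n \<and> n + 0 \<le> B} = {A..B}" by auto
    next
      fix n
      have "z n * cnj (z n) = complex_of_real ((cmod (z n))^2)" by (rule complex_norm_square[symmetric])
      then show "z (n + 0) * cnj (z n) = 1" using z1[of n] by simp
    qed
    also have "(\<Sum>n\<in>{A..B}. (1::complex)) = of_nat (B - A + 1)" using AB by simp
    finally show ?thesis by (metis norm_of_nat)
  qed
  define g where "g h = cmod (C h)" for h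
  have inner: "(\<Sum>s<H. cmod (T r s)) \<le> g 0 + 2 * (\<Sum>h=1..<H. g h)" if r: "r < H" for r
  proof -
    have "(\<Sum>s<H. cmod (T r s)) = (\<Sum>s<H. (if s \<le> r then g (r - s) else g (s - r)))"
    proof (intro sum.cong refl)
      fix s assume s: "s \<in> {..<H}"
      show "cmod (T r s) = (if s \<le> r then g (r - s) else g (s - r))"
      proof (cases "s \<le> r")
        case True then show ?thesis using TC[OF True r] s by (simp add: g_def)
      next
        case False
        then have "cmod (T r s) = cmod (T s r)" using Tsym[of s r] by simp
        then show ?thesis using TC[of r s] False s r by (simp add: g_def)
      qed
    qed
    also have "\<dots> \<le> g 0 + 2 * (\<Sum>h=1..<H. g h)"
      by (rule dist_sum_bound[OF _ r]) (simp add: g_def)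
    finally show ?thesis .
  qed
  have "(\<Sum>r<H. \<Sum>s<H. cmod (T r s)) \<le> (\<Sum>r<H. g 0 + 2 * (\<Sum>h=1..<H. g h))"
    by (rule sum_mono) (use inner in auto)
  also have "\<dots> = real H * (real (B - A + 1) + 2 * (\<Sum>h=1..<H. g h))" using C0 by (simp add: g_def)
  finally have dd: "(\<Sum>m\<in>Ms. (cmod (V m))^2) \<le> real H * (real (B - A + 1) + 2 * (\<Sum>h=1..<H. g h))"
    using sumV by linarith
  have "(real H)^2 * (cmod S)^2 = (cmod (of_nat H * S))^2" by (simp add: norm_mult power_mult_distrib)
  also have "\<dots> \<le> real H * (real (B - A + 1) + 2 * (\<Sum>h=1..<H. g h)) * real (B - A + H)"
    using cs dd by (meson mult_right_mono of_nat_0_le_iff order_trans)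
  finally have "(real H)^2 * (cmod S)^2 \<le> real H * (real (B - A + 1) + 2 * (\<Sum>h=1..<H. g h)) * real (B - A + H)" .
  then have "real H * (real H * (cmod S)^2) \<le> real H * ((real (B - A + 1) + 2 * (\<Sum>h=1..<H. g h)) * real (B - A + H))"
    by (simp add: power2_eq_square algebra_simps)
  then have "real H * (cmod S)^2 \<le> (real (B - A + 1) + 2 * (\<Sum>h=1..<H. g h)) * real (B - A + H)"
    using H by (simp add: mult_le_cancel_left_pos)
  then have "(cmod S)^2 \<le> (real (B - A + 1) + 2 * (\<Sum>h=1..<H. g h)) * real (B - A + H) / real H"
    using H by (simp add: pos_le_divide_eq mult.commute)
  then show ?thesis by (simp add: S_def g_def C_def field_simps)
qed

lemma fdl: "(y::real) > 0 \<Longrightarrow> 1/y - 2/(y+1) + 1/(y+2) = 2/(y*(y+1)*(y+2))"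
proof -
  assume y: "y > 0"
  have a: "y \<noteq> 0" "y + 1 \<noteq> 0" "y + 2 \<noteq> 0" using y by auto
  have e1: "1/y = (y+1)*(y+2)/(y*(y+1)*(y+2))" using a by simp
  have e2: "2/(y+1) = 2*y*(y+2)/(y*(y+1)*(y+2))" using a by simp
  have e3: "1/(y+2) = y*(y+1)/(y*(y+1)*(y+2))" using a by simp
  have "1/y - 2/(y+1) + 1/(y+2) = ((y+1)*(y+2) - 2*y*(y+2) + y*(y+1))/(y*(y+1)*(y+2))"
    unfolding e1 e2 e3 by (simp only: diff_divide_distrib add_divide_distrib)
  also have "(y+1)*(y+2) - 2*y*(y+2) + y*(y+1) = 2" by (simp add: algebra_simps)
  finally show ?thesis .
qed

lemma d2ln:
  fixes x h :: real
  assumes x: "x > 0" and h: "h \<ge> 0"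
  shows "2*h/(x+h+2)^3 \<le> (ln (x+h) - 2*ln (x+h+1) + ln (x+h+2)) - (ln x - 2*ln (x+1) + ln (x+2))
       \<and> (ln (x+h) - 2*ln (x+h+1) + ln (x+h+2)) - (ln x - 2*ln (x+1) + ln (x+2)) \<le> 2*h/x^3"
proof (cases "h = 0")
  case True then show ?thesis by simp
next
  case False
  then have hp: "x < x + h" using h by simp
  define f where "f y = ln y - 2*ln (y+1) + ln (y+2)" for y :: real
  have der: "\<And>y. x \<le> y \<Longrightarrow> y \<le> x + h \<Longrightarrow> (f has_real_derivative (1/y - 2/(y+1) + 1/(y+2))) (at y)"
    unfolding f_def using x by (auto intro!: derivative_eq_intros)
  obtain y where y: "x < y" "y < x + h" "f (x+h) - f x = (x + h - x) * (1/y - 2/(y+1) + 1/(y+2))"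
    using MVT2[OF hp der] by blast
  have yp: "y > 0" using y x by simp
  have fd: "1/y - 2/(y+1) + 1/(y+2) = 2/(y*(y+1)*(y+2))"
    using yp by (rule fdl)
  have lo: "y*(y+1)*(y+2) \<le> (x+h+2)^3"
  proof -
    have "y*(y+1)*(y+2) \<le> (x+h+2)*(x+h+2)*(x+h+2)"
      using y yp by (intro mult_mono) auto
    then show ?thesis by (simp add: power3_eq_cube)
  qed
  have hi: "x^3 \<le> y*(y+1)*(y+2)"
  proof -
    have "x*x*x \<le> y*(y+1)*(y+2)" using y x by (intro mult_mono) auto
    then show ?thesis by (simp add: power3_eq_cube)
  qed
  have p3: "0 < x^3" using x by simp
  have "2/(x+h+2)^3 \<le> 2/(y*(y+1)*(y+2))"
  proof -
    have "0 < y*(y+1)*(y+2)" using yp by simp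
    moreover have "0 < (x+h+2)^3" using x h by simp
    ultimately show ?thesis using lo by (intro divide_left_mono) (auto intro!: mult_pos_pos)
  qed
  moreover have "2/(y*(y+1)*(y+2)) \<le> 2/x^3"
  proof -
    have "0 < y*(y+1)*(y+2)" using yp by simp
    then show ?thesis using hi p3 yp by (intro divide_left_mono) (auto intro!: mult_pos_pos)
  qed
  ultimately have "2/(x+h+2)^3 \<le> 2/(y*(y+1)*(y+2)) \<and> 2/(y*(y+1)*(y+2)) \<le> 2/x^3" by simp
  then have "h * (2/(x+h+2)^3) \<le> h * (2/(y*(y+1)*(y+2))) \<and> h * (2/(y*(y+1)*(y+2))) \<le> h * (2/x^3)"
    using h by (meson mult_left_mono)
  then show ?thesis using y(3) fd by (simp add: f_def mult.commute)
qed

lemma Cbound: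
  fixes t s :: real and M A B h H :: nat
  assumes s0: "s \<ge> 1000" and st: "s^3 = t"
    and M1: "64* s \<le> real M" and M2: "2*pi*(real M)^2 \<le> s^3"
    and AB: "M+1 \<le> A" "A \<le> B" "B \<le> 2*M"
    and h: "1 \<le> h" "real h \<le> real M / s"
  shows "cmod (\<Sum>n\<in>{n. A \<le> n \<and> n + h \<le> B}. cis (- t * ln (real (n+h))) * cnj (cis (- t * ln (real n)))) \<le> 9* s"
proof (cases "A + h \<le> B")
  case False
  then have e: "{n. A \<le> n \<and> n + h \<le> B} = {}" by auto
  show ?thesis unfolding e using s0 by simp
next
  case True
  have sp: "s > 0" using s0 by simp
  have tp: "t > 0" using st sp by auto
  have Mp: "real M > 0" using M1 sp by linarith
  define v where "v n = t * ln (real (n+h)) - t * ln (real n)" for n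
  have seteq: "{n. A \<le> n \<and> n + h \<le> B} = {A..B-h}" using True by auto
  have "(\<Sum>n\<in>{n. A \<le> n \<and> n + h \<le> B}. cis (- t * ln (real (n+h))) * cnj (cis (- t * ln (real n))))
      = cnj (\<Sum>n=A..B-h. cis (v n))"
    unfolding seteq cnj_sum by (intro sum.cong) (auto simp: v_def cis_cnj cis_mult algebra_simps)
  then have eq: "cmod (\<Sum>n\<in>{n. A \<le> n \<and> n + h \<le> B}. cis (- t * ln (real (n+h))) * cnj (cis (- t * ln (real n))))
      = cmod (\<Sum>n=A..B-h. cis (v n))" by (metis complex_mod_cnj)
  define lm where "lm = t * h / (4 * (real M)^3)"
  define LM where "LM = 2 * t * h / (real M)^3"
  define eta where "eta = s / real M"
  have lmp: "0 < lm" using tp h Mp by (simp add: lm_def)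
  have lmLM: "lm \<le> LM" using tp h Mp by (simp add: lm_def LM_def divide_simps)
  have etap: "0 < eta" using sp Mp by (simp add: eta_def)
  have eta1: "eta \<le> 1" using M1 sp Mp by (simp add: eta_def)
  have d2: "lm \<le> v (n+2) - 2 * v (n+1) + v n \<and> v (n+2) - 2 * v (n+1) + v n \<le> LM"
    if n: "A \<le> n" "n + 2 \<le> B - h" for n
  proof -
    have xp: "real n > 0" using n AB by simp
    have D: "2*h/(real n+h+2)^3 \<le> (ln (real n+h) - 2*ln (real n+h+1) + ln (real n+h+2)) - (ln (real n) - 2*ln (real n+1) + ln (real n+2))
       \<and> (ln (real n+h) - 2*ln (real n+h+1) + ln (real n+h+2)) - (ln (real n) - 2*ln (real n+1) + ln (real n+2)) \<le> 2*h/(real n)^3"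
      using d2ln[OF xp, of "real h"] by simp
    have vexp: "v (n+2) - 2 * v (n+1) + v n = t * ((ln (real n+h) - 2*ln (real n+h+1) + ln (real n+h+2)) - (ln (real n) - 2*ln (real n+1) + ln (real n+2)))"
      by (simp add: v_def algebra_simps)
    have c1: "(real n + h + 2)^3 \<le> (2 * real M)^3"
      using n AB by (intro power_mono) auto
    have c2: "(real M)^3 \<le> (real n)^3" using n AB by (intro power_mono) auto
    have "lm = t * (2*h/(2 * real M)^3)" by (simp add: lm_def power_mult_distrib)
    also have "\<dots> \<le> t * (2*h/(real n+h+2)^3)"
      using c1 tp xp Mp by (intro mult_left_mono divide_left_mono) (auto intro!: mult_pos_pos)
    finally have l1: "lm \<le> t * (2*h/(real n+h+2)^3)" .
    have "t * (2*h/(real n)^3) \<le> t * (2*h/(real M)^3)"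
      using c2 tp Mp xp by (intro mult_left_mono divide_left_mono) (auto intro!: mult_pos_pos)
    also have "\<dots> = LM" by (simp add: LM_def)
    finally have l2: "t * (2*h/(real n)^3) \<le> LM" .
    show ?thesis unfolding vexp using D l1 l2 tp
      by (meson mult_left_mono order_trans less_imp_le)
  qed
  have AB': "A \<le> B - h" using True by simp
  have S: "cmod (\<Sum>n=A..B-h. cis (v n)) \<le> 1 + (real (B - h - A) * LM / (2*pi) + 2) * (2*eta/lm + 1 + 8/eta)"
    by (rule sdt[OF AB' lmp lmLM etap eta1 d2])
  define P where "P = t * h / (pi * (real M)^2)"
  define R where "R = 2*eta/lm"
  have X1: "real (B - h - A) * LM / (2*pi) \<le> P"
  proof -
    have "real (B - h - A) \<le> real M" using AB by simp
    then have "real (B - h - A) * LM \<le> real M * LM"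
      using tp h Mp by (intro mult_right_mono) (auto simp: LM_def)
    then have "real (B - h - A) * LM / (2*pi) \<le> real M * LM / (2*pi)"
      by (intro divide_right_mono) auto
    also have "\<dots> = P" using Mp by (simp add: LM_def P_def power3_eq_cube power2_eq_square field_simps)
    finally show ?thesis .
  qed
  have PR: "P * R = 8* s/pi"
    using tp h Mp sp by (simp add: P_def R_def lm_def eta_def field_simps power3_eq_cube power2_eq_square)
  have Pb: "P \<le> s^2/(pi * real M)"
  proof -
    have "t * h \<le> t * (real M / s)" using h tp by (intro mult_left_mono) auto
    also have "\<dots> = s^2 * real M" using st sp by (simp add: power3_eq_cube power2_eq_square field_simps)
    finally have "t * h \<le> s^2 * real M" .
    then have "t * h / (pi * (real M)^2) \<le> s^2 * real M / (pi * (real M)^2)"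
      by (intro divide_right_mono) auto
    also have "\<dots> = s^2/(pi * real M)" using Mp by (simp add: power2_eq_square)
    finally show ?thesis by (simp add: P_def)
  qed
  have Rb: "R \<le> 8 * (real M)^2 / s^2"
  proof -
    have "R = 8 * s * (real M)^2 / (t * h)" using Mp sp tp
      by (simp add: R_def lm_def eta_def field_simps power3_eq_cube power2_eq_square)
    also have "\<dots> \<le> 8 * s * (real M)^2 / t" using tp h Mp sp
      by (intro divide_left_mono) (auto intro!: mult_pos_pos)
    also have "\<dots> = 8 * (real M)^2 / s^2" using sp by (simp add: st[symmetric] power3_eq_cube power2_eq_square field_simps)
    finally show ?thesis .
  qed
  have Pn: "0 \<le> P" using tp h by (simp add: P_def)
  have Rn: "0 \<le> R" using etap lmp by (simp add: R_def)
  have e8: "8/eta = 8 * real M / s" by (simp add: eta_def)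
  have "1 + (real (B - h - A) * LM / (2*pi) + 2) * (2*eta/lm + 1 + 8/eta) \<le> 1 + (P + 2) * (R + 1 + 8/eta)"
  proof -
    have q: "0 \<le> 2*eta/lm + 1 + 8/eta" using etap lmp by simp
    have "real (B - h - A) * LM / (2*pi) + 2 \<le> P + 2" using X1 by simp
    then have "(real (B - h - A) * LM / (2*pi) + 2) * (2*eta/lm + 1 + 8/eta) \<le> (P + 2) * (2*eta/lm + 1 + 8/eta)"
      using q by (rule mult_right_mono)
    then show ?thesis by (simp add: R_def)
  qed
  also have "\<dots> = 1 + P*R + P*(1 + 8 * real M / s) + 2*R + 2 + 16 * real M / s"
    by (simp add: e8 algebra_simps add_divide_distrib)
  also have "\<dots> \<le> 1 + 8* s/pi + s^2/(pi * real M) * (1 + 8 * real M / s) + 2*(8 * (real M)^2 / s^2) + 2 + 16 * real M / s"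
    unfolding PR using Pb Rb Mp sp by (intro add_mono mult_right_mono order_refl) auto
  also have "\<dots> = 3 + 16* s/pi + s^2/(pi * real M) + 16 * (real M)^2 / s^2 + 16 * real M / s"
    using Mp sp by (simp add: field_simps power2_eq_square)
  also have "\<dots> \<le> 9 * s"
  proof -
    have pi3: "pi > 3" by (rule pi_gt3)
    have a1: "16* s/pi \<le> 16* s/3" using pi3 sp by (intro divide_left_mono) auto
    have a2: "s^2/(pi * real M) \<le> s / 192"
    proof -
      have "s^2/(pi * real M) \<le> s^2 / (3 * (64 * s))"
        using pi3 M1 sp by (intro divide_left_mono mult_mono) auto
      also have "\<dots> = s/192" using sp by (simp add: power2_eq_square)
      finally show ?thesis .
    qed
    have m6: "6 * (real M)^2 \<le> s^3"
    proof -
      have "6 * (real M)^2 \<le> 2*pi*(real M)^2" using pi3 by (intro mult_right_mono) auto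
      then show ?thesis using M2 by linarith
    qed
    have a3: "16 * (real M)^2 / s^2 \<le> 16 * s / 6"
    proof -
      have "16 * (real M)^2 / s^2 \<le> 16 * (s^3/6) / s^2" using m6 by (intro divide_right_mono) auto
      also have "\<dots> = 16 * s / 6" using sp by (simp add: power3_eq_cube power2_eq_square)
      finally show ?thesis .
    qed
    have a4: "16 * real M / s \<le> s / 2"
    proof -
      have "(32 * real M)^2 = 1024 * (real M)^2" by (simp add: power2_eq_square)
      also have "\<dots> \<le> 1024 * (s^3/6)" using m6 by simp
      also have "\<dots> = (1024/6) * s^3" by simp
      also have "\<dots> \<le> s * s^3" using s0 sp by (intro mult_right_mono) auto
      also have "\<dots> = (s^2)^2" by (simp add: power2_eq_square power3_eq_cube)
      finally have "(32 * real M)^2 \<le> (s^2)^2" .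
      then have "32 * real M \<le> s^2" by (rule power2_le_imp_le) simp
      then have "16 * real M \<le> (s/2) * s" by (simp add: power2_eq_square)
      then show ?thesis using sp by (simp add: pos_divide_le_eq)
    qed
    show ?thesis using a1 a2 a3 a4 s0 by linarith
  qed
  finally show ?thesis using eq S by linarith
qed

lemma block:
  fixes t s :: real and M A B :: nat
  assumes s0: "s \<ge> 1000" and st: "s^3 = t"
    and M1: "64 * s \<le> real M" and M2: "2*pi*(real M)^2 \<le> s^3"
    and AB: "M+1 \<le> A" "A \<le> B" "B \<le> 2*M"
  shows "cmod (\<Sum>n=A..B. cis (- t * ln (real n))) \<le> 5 * sqrt (real M * s)"
proof -
  have sp: "s > 0" using s0 by simp
  have Mp: "real M > 0" using M1 sp by linarith
  define H where "H = nat \<lfloor>real M / s\<rfloor>"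
  have x0: "0 \<le> real M / s" using Mp sp by simp
  have Hr: "real H = of_int \<lfloor>real M / s\<rfloor>" using x0 by (simp add: H_def)
  have Hle: "real H \<le> real M / s" using Hr by linarith
  have Hgt: "real M / s - 1 < real H" using Hr by linarith
  have Ms64: "64 \<le> real M / s" using M1 sp by (simp add: pos_le_divide_eq)
  have H1: "1 \<le> H" using Hgt Ms64 by linarith
  have Hp: "real H > 0" using H1 by simp
  define z where "z n = cis (- t * ln (real n))" for n
  have z1: "cmod (z n) = 1" for n by (simp add: z_def)
  have W: "(cmod (\<Sum>n=A..B. z n))^2 \<le> real (B - A + H) / real H *
     (real (B - A + 1) + 2 * (\<Sum>h=1..<H. cmod (\<Sum>n\<in>{n. A \<le> n \<and> n + h \<le> B}. z (n+h) * cnj (z n))))"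
    by (rule weyl[OF AB(2) H1 z1])
  have sumb: "(\<Sum>h=1..<H. cmod (\<Sum>n\<in>{n. A \<le> n \<and> n + h \<le> B}. z (n+h) * cnj (z n))) \<le> (\<Sum>h=1..<H. 9 * s)"
  proof (rule sum_mono)
    fix h assume h: "h \<in> {1..<H}"
    have "real h \<le> real M / s" using h Hle by simp
    then show "cmod (\<Sum>n\<in>{n. A \<le> n \<and> n + h \<le> B}. z (n+h) * cnj (z n)) \<le> 9 * s"
      unfolding z_def using h by (intro Cbound[OF s0 st M1 M2 AB]) auto
  qed
  also have "\<dots> = real (H - 1) * (9 * s)" by simp
  finally have sumb': "(\<Sum>h=1..<H. cmod (\<Sum>n\<in>{n. A \<le> n \<and> n + h \<le> B}. z (n+h) * cnj (z n))) \<le> real (H - 1) * (9 * s)" .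
  have L: "real (B - A + 1) \<le> real M" using AB by simp
  have K: "real (B - A + H) \<le> real M + real H" using AB by simp
  have "(cmod (\<Sum>n=A..B. z n))^2 \<le> real (B - A + H) / real H * (real M + 2 * (real (H - 1) * (9 * s)))"
    using W L sumb' Hp by (smt (verit) divide_nonneg_nonneg mult_left_mono of_nat_0_le_iff)
  also have "\<dots> \<le> (real M + real H) / real H * (real M + 2 * (real (H - 1) * (9 * s)))"
    using K Hp sp by (intro mult_right_mono divide_right_mono) auto
  also have "\<dots> = (real M + real H) * real M / real H + 18 * s * (real M + real H) * (real (H - 1) / real H)"
    using Hp by (simp add: field_simps)
  also have "\<dots> \<le> (real M * real M / real H + real M) + 18 * s * (real M + real H) * 1"
  proof -
    have "(real M + real H) * real M / real H = real M * real M / real H + real M"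
      using Hp by (simp add: field_simps)
    moreover have "real (H - 1) / real H \<le> 1" using Hp by simp
    moreover have "0 \<le> 18 * s * (real M + real H)" using sp Mp Hp by simp
    ultimately have "18 * s * (real M + real H) * (real (H - 1) / real H) \<le> 18 * s * (real M + real H) * 1"
      by (intro mult_left_mono) auto
    then show ?thesis using \<open>(real M + real H) * real M / real H = real M * real M / real H + real M\<close> by linarith
  qed
  also have "\<dots> \<le> (2 * real M * s + real M) + (18 * s * real M + 18 * real M)"
  proof -
    have a: "real M * real M / real H \<le> 2 * real M * s"
    proof -
      have "real M \<le> 2 * s * real H"
      proof -
        have "real M / s \<le> 2 * real H" using Hgt Ms64 by linarith
        then show ?thesis using sp by (simp add: pos_divide_le_eq mult.commute mult.left_commute)
      qed
      then have "real M * real M \<le> (2 * s * real H) * real M" using Mp by (intro mult_right_mono) auto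
      then show ?thesis using Hp by (simp add: pos_divide_le_eq algebra_simps)
    qed
    have b: "18 * s * (real M + real H) * 1 \<le> 18 * s * real M + 18 * real M"
    proof -
      have "s * real H \<le> real M" using Hle sp by (simp add: pos_le_divide_eq mult.commute)
      then show ?thesis by (simp add: algebra_simps)
    qed
    show ?thesis using a b by linarith
  qed
  also have "\<dots> \<le> 25 * (real M * s)"
  proof -
    have "19 * real M \<le> 5 * (real M * s)" using Mp s0 by (simp add: mult_left_mono)
    then show ?thesis by (simp add: algebra_simps)
  qed
  finally have sq: "(cmod (\<Sum>n=A..B. z n))^2 \<le> 25 * (real M * s)" .
  have "cmod (\<Sum>n=A..B. z n) \<le> sqrt (25 * (real M * s))" using sq by (simp add: real_le_rsqrt)
  also have "\<dots> = 5 * sqrt (real M * s)" by (simp add: real_sqrt_mult)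
  finally show ?thesis by (simp add: z_def)
qed

lemma abel_id:
  fixes w :: "nat \<Rightarrow> real" and f :: "nat \<Rightarrow> complex"
  assumes "a \<le> b"
  shows "(\<Sum>n=a..b. of_real (w n) * f n) = of_real (w b) * (\<Sum>n=a..b. f n)
      + (\<Sum>k\<in>{a..<b}. of_real (w k - w (Suc k)) * (\<Sum>n=a..k. f n))"
  using assms
proof (induct b rule: dec_induct)
  case base then show ?case by simp
next
  case (step m)
  have e1: "{a..Suc m} = insert (Suc m) {a..m}" using step by auto
  have e2: "{a..<Suc m} = insert m {a..<m}" using step by auto
  show ?case using step by (simp add: e1 e2 algebra_simps)
qed

lemma abel:
  fixes w :: "nat \<Rightarrow> real" and f :: "nat \<Rightarrow> complex"
  assumes ab: "a \<le> b" and dec: "\<And>n. a \<le> n \<Longrightarrow> n < b \<Longrightarrow> w (Suc n) \<le> w n"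
    and pos: "\<And>n. a \<le> n \<Longrightarrow> n \<le> b \<Longrightarrow> 0 \<le> w n"
    and P: "\<And>k. a \<le> k \<Longrightarrow> k \<le> b \<Longrightarrow> cmod (\<Sum>n=a..k. f n) \<le> P"
  shows "cmod (\<Sum>n=a..b. of_real (w n) * f n) \<le> w a * P"
proof -
  have "cmod (\<Sum>n=a..b. of_real (w n) * f n) \<le> cmod (of_real (w b) * (\<Sum>n=a..b. f n))
      + cmod (\<Sum>k\<in>{a..<b}. of_real (w k - w (Suc k)) * (\<Sum>n=a..k. f n))"
    unfolding abel_id[OF ab] by (rule norm_triangle_ineq)
  also have "cmod (of_real (w b) * (\<Sum>n=a..b. f n)) \<le> w b * P"
    using pos[of b] P[of b] ab by (simp add: norm_mult mult_left_mono)
  also have "cmod (\<Sum>k\<in>{a..<b}. of_real (w k - w (Suc k)) * (\<Sum>n=a..k. f n)) \<le> (\<Sum>k\<in>{a..<b}. (w k - w (Suc k)) * P)"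
  proof (rule order_trans[OF norm_sum sum_mono])
    fix k assume k: "k \<in> {a..<b}"
    have "0 \<le> w k - w (Suc k)" using dec[of k] k by simp
    then have "cmod (of_real (w k - w (Suc k)) * (\<Sum>n=a..k. f n)) = (w k - w (Suc k)) * cmod (\<Sum>n=a..k. f n)"
      by (simp only: norm_mult norm_of_real abs_of_nonneg)
    also have "\<dots> \<le> (w k - w (Suc k)) * P"
      using P[of k] k \<open>0 \<le> w k - w (Suc k)\<close> by (intro mult_left_mono) auto
    finally show "cmod (of_real (w k - w (Suc k)) * (\<Sum>n=a..k. f n)) \<le> (w k - w (Suc k)) * P" .
  qed
  also have "(\<Sum>k\<in>{a..<b}. (w k - w (Suc k)) * P) = (w a - w b) * P"
  proof -
    have tel: "(\<Sum>k\<in>{a..<b}. w k - w (Suc k)) = w a - w b"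
      using sum_Suc_diff'[OF ab, of w] by (simp add: sum_subtractf)
    show ?thesis by (simp add: sum_distrib_right[symmetric] tel)
  qed
  finally show ?thesis by (simp add: algebra_simps)
qed

lemma trivial_sum: "(\<Sum>n=1..N. 1 / sqrt (real n)) \<le> 2 * sqrt (real N)"
proof (induct N)
  case 0 then show ?case by simp
next
  case (Suc N)
  have "1 / sqrt (real (Suc N)) \<le> 2 * sqrt (real (Suc N)) - 2 * sqrt (real N)"
  proof -
    define a where "a = sqrt (real N)"
    define b where "b = sqrt (real (Suc N))"
    have b0: "b > 0" by (simp add: b_def)
    have a0: "a \<ge> 0" by (simp add: a_def)
    have ab: "a \<le> b" by (simp add: a_def b_def)
    have sq: "b*b - a*a = 1" by (simp add: a_def b_def)
    have "1 = (b - a) * (b + a)" using sq by (simp add: algebra_simps)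
    also have "\<dots> \<le> (b - a) * (2 * b)" using ab a0 by (intro mult_left_mono) auto
    also have "(b - a) * (2 * b) = (2 * (b - a)) * b" by (simp only: mult_ac)
    finally have "1 \<le> 2 * (b - a) * b" .
    then have "1 / b \<le> 2 * (b - a)" using b0 by (simp add: divide_le_eq)
    then show ?thesis by (simp add: a_def b_def algebra_simps)
  qed
  then show ?case using Suc by simp
qed

lemma term_eq:
  assumes "1 \<le> n"
  shows "1 / (of_nat n powr (Complex (1/2) t)) = complex_of_real (1 / sqrt (real n)) * cis (- t * ln (real n))"
proof -
  have n0: "(of_nat n :: complex) \<noteq> 0" using assms by simp
  have "(of_nat n :: complex) powr (Complex (1/2) t) = exp (Complex (1/2) t * of_real (ln (real n)))"
    using assms by (simp add: powr_def)
  also have "Complex (1/2) t * of_real (ln (real n)) = Complex (ln (real n) / 2) (t * ln (real n))"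
    by (simp add: complex_eq_iff)
  also have "exp \<dots> = of_real (exp (ln (real n) / 2)) * cis (t * ln (real n))"
    by (simp add: exp_eq_polar)
  also have "exp (ln (real n) / 2) = sqrt (real n)"
  proof -
    have "exp (ln (real n) / 2) = real n powr (1/2)" using assms by (simp add: powr_def)
    then show ?thesis by (simp add: powr_half_sqrt)
  qed
  finally have e: "(of_nat n :: complex) powr (Complex (1/2) t) = of_real (sqrt (real n)) * cis (t * ln (real n))" .
  have "cis (- t * ln (real n)) = inverse (cis (t * ln (real n)))" by (simp add: cis_inverse)
  then show ?thesis unfolding e using assms by (simp add: field_simps)
qed

lemma wblock:
  fixes t s :: real and M K :: nat
  assumes s0: "s \<ge> 1000" and st: "s^3 = t"
    and M1: "64 * s \<le> real M" and M2: "2*pi*(real M)^2 \<le> s^3"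
    and K: "M+1 \<le> K" "K \<le> 2*M"
  shows "cmod (\<Sum>n=M+1..K. complex_of_real (1 / sqrt (real n)) * cis (- t * ln (real n))) \<le> 5 * sqrt s"
proof -
  have sp: "s > 0" using s0 by simp
  have "cmod (\<Sum>n=M+1..K. complex_of_real (1 / sqrt (real n)) * cis (- t * ln (real n)))
      \<le> 1 / sqrt (real (M+1)) * (5 * sqrt (real M * s))"
  proof (rule abel[OF K(1)])
    fix n assume "M + 1 \<le> n" "n < K"
    then show "1 / sqrt (real (Suc n)) \<le> 1 / sqrt (real n)"
      by (intro divide_left_mono) auto
  next
    fix n show "0 \<le> 1 / sqrt (real n)" by simp
  next
    fix k assume k: "M + 1 \<le> k" "k \<le> K"
    show "cmod (\<Sum>n=M+1..k. cis (- t * ln (real n))) \<le> 5 * sqrt (real M * s)"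
      using k K by (intro block[OF s0 st M1 M2]) auto
  qed
  also have "\<dots> \<le> 5 * sqrt s"
  proof -
    have "sqrt (real M * s) \<le> sqrt (real (M+1) * s)" using sp by (intro real_sqrt_le_mono mult_right_mono) auto
    also have "\<dots> = sqrt (real (M+1)) * sqrt s" by (simp add: real_sqrt_mult)
    finally have "sqrt (real M * s) \<le> sqrt (real (M+1)) * sqrt s" .
    then have "1 / sqrt (real (M+1)) * sqrt (real M * s) \<le> sqrt s"
      by (simp add: divide_le_eq mult.commute)
    then show ?thesis by simp
  qed
  finally show ?thesis .
qed

lemma powr_inv_pow:
  fixes a :: real assumes "0 < a" "0 < k"
  shows "(a powr (1 / real k)) ^ k = a"
proof -
  have "(a powr (1 / real k)) ^ k = (a powr (1 / real k)) powr (real k)"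
    using assms by (simp add: powr_realpow)
  also have "\<dots> = a" using assms by (simp add: powr_powr)
  finally show ?thesis .
qed

lemma ln2_ge: "2/3 \<le> ln (2::real)" by (rule ln2_ge_two_thirds)

lemma small_case:
  fixes tau :: real
  assumes t1: "648 \<le> tau" and t2: "tau \<le> 2^60"
  shows "2 * sqrt (sqrt tau) \<le> 1.89725 * tau powr (1/6) * ln tau + 9.89044 * tau powr (1/6)"
proof -
  have tp: "tau > 0" using t1 by simp
  define U where "U = tau powr (1/6)"
  define X where "X = tau powr (1/12)"
  have Up: "U > 0" using tp by (simp add: U_def)
  have Xp: "X > 0" using tp by (simp add: X_def)
  have "sqrt (sqrt tau) = tau powr (1/4)"
    using tp by (simp add: powr_half_sqrt[symmetric] powr_powr)
  also have "\<dots> = U * X" using tp by (simp add: U_def X_def powr_add[symmetric])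
  finally have sq: "sqrt (sqrt tau) = U * X" .
  have lnX: "ln X = ln tau / 12" using tp by (simp add: X_def ln_powr)
  have lt0: "ln tau \<ge> 0" using t1 by simp
  have l2: "2/3 \<le> ln (2::real)" by (rule ln2_ge)
  have key: "2 * X \<le> (189725/100000) * ln tau + 989044/100000"
  proof (cases "X \<le> 4")
    case True then show ?thesis using lt0 by linarith
  next
    case False
    have "ln 4 \<le> ln X" using False Xp by simp
    moreover have "ln (4::real) = 2 * ln 2"
      using ln_realpow[of 2 2] by simp
    ultimately have lx: "4/3 \<le> ln X" using l2 by linarith
    show ?thesis
    proof (cases "X \<le> 16")
      case True
      have "16 \<le> ln tau" using lx lnX by linarith
      then show ?thesis using True by linarith
    next
      case False
      have "ln 16 \<le> ln X" using False Xp by simp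
      moreover have "ln (16::real) = 4 * ln 2"
        using ln_realpow[of 2 4] by simp
      ultimately have lx2: "8/3 \<le> ln X" using l2 by linarith
      have "ln tau \<le> ln (2^60)" using t2 tp by simp
      also have "\<dots> = 60 * ln 2" using ln_realpow[of 2 60] by simp
      finally have "ln X \<le> 5 * ln 2" using lnX by simp
      also have "5 * ln 2 = ln (32::real)" using ln_realpow[of 2 5] by simp
      finally have "X \<le> 32" using Xp by simp
      moreover have "32 \<le> ln tau" using lx2 lnX by linarith
      ultimately show ?thesis by linarith
    qed
  qed
  have "2 * sqrt (sqrt tau) = U * (2 * X)" using sq by simp
  also have "\<dots> \<le> U * ((189725/100000) * ln tau + 989044/100000)" using key Up by (intro mult_left_mono) auto
  also have "\<dots> = 1.89725 * U * ln tau + 9.89044 * U" by (simp add: algebra_simps)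
  finally show ?thesis by (simp add: U_def)
qed

lemma big_case:
  fixes t :: real and N :: nat
  defines "tau \<equiv> t / (2*pi)"
  assumes tp: "t > 0" and tb: "2^60 < tau" and N: "real N \<le> sqrt tau"
  shows "cmod (\<Sum>n=1..N. complex_of_real (1 / sqrt (real n)) * cis (- t * ln (real n)))
     \<le> 1.89725 * tau powr (1/6) * ln tau + 9.89044 * tau powr (1/6)"
proof -
  define f where "f n = complex_of_real (1 / sqrt (real n)) * cis (- t * ln (real n))" for n
  have taup: "tau > 0" using tb by simp
  have ttau: "t = 2*pi*tau" by (simp add: tau_def)
  define s where "s = t powr (1/3)"
  have sp: "s > 0" using tp by (simp add: s_def)
  have st: "s^3 = t" using powr_inv_pow[OF tp, of 3] by (simp add: s_def)
  have s0: "s \<ge> 1000"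
  proof -
    have "(1000::real)^3 \<le> 2^60" by simp
    also have "\<dots> \<le> tau" using tb by simp
    also have "\<dots> \<le> t" using ttau taup pi_gt3 by simp
    finally have "1000^3 \<le> s^3" using st by simp
    then show ?thesis using sp power_mono_iff[of 1000 s 3] by simp
  qed
  define m0 where "m0 = nat \<lceil>64 * s\<rceil>"
  have m0l: "64 * s \<le> real m0" unfolding m0_def by linarith
  have m0u: "real m0 \<le> 64 * s + 1" unfolding m0_def using sp by linarith
  have m0p: "1 \<le> m0" using m0l s0 by simp
  have fn: "cmod (f n) = 1 / sqrt (real n)" for n
    unfolding f_def by (simp only: norm_mult norm_cis norm_of_real mult_1_right) simp
  have triv: "cmod (\<Sum>n=1..k. f n) \<le> 2 * sqrt (real k)" for k
  proof -
    have "cmod (\<Sum>n=1..k. f n) \<le> (\<Sum>n=1..k. cmod (f n))" by (rule norm_sum)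
    also have "\<dots> = (\<Sum>n=1..k. 1 / sqrt (real n))" by (simp add: fn)
    also have "\<dots> \<le> 2 * sqrt (real k)" by (rule trivial_sum)
    finally show ?thesis .
  qed
  have M2: "2*pi*(real M)^2 \<le> s^3" if "M < N" for M
  proof -
    have "real M \<le> sqrt tau" using that N by simp
    then have "(real M)^2 \<le> (sqrt tau)^2" by (intro power_mono) auto
    then have "(real M)^2 \<le> tau" using taup by simp
    then show ?thesis using st ttau by simp
  qed
  define R where "R J = {n. m0 < n \<and> n \<le> N \<and> n \<le> m0 * 2^J}" for J
  define Bl where "Bl J = {n. m0 * 2^J < n \<and> n \<le> N \<and> n \<le> m0 * 2^(Suc J)}" for J
  have blk: "cmod (\<Sum>n\<in>Bl J. f n) \<le> 5 * sqrt s" for J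
  proof (cases "N \<le> m0 * 2^J")
    case True
    then have "Bl J = {}" by (auto simp: Bl_def)
    then show ?thesis using sp by simp
  next
    case False
    define M where "M = m0 * 2^J"
    have MN: "M < N" using False by (simp add: M_def)
    have M1: "64 * s \<le> real M"
    proof -
      have "m0 \<le> M" by (simp add: M_def)
      then show ?thesis using m0l by linarith
    qed
    have Mp: "1 \<le> M" using m0p by (simp add: M_def)
    have e: "Bl J = {M+1..min N (2*M)}" by (auto simp: Bl_def M_def)
    show ?thesis unfolding e f_def
      by (rule wblock[OF s0 st M1 M2[OF MN]]) (use MN Mp in auto)
  qed
  have Rb: "cmod (\<Sum>n\<in>R J. f n) \<le> real J * (5 * sqrt s)" for J
  proof (induct J)
    case 0
    have "R 0 = {}" by (auto simp: R_def)
    then show ?case by simp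
  next
    case (Suc J)
    have e: "R (Suc J) = R J \<union> Bl J"
    proof -
      have b: "m0 * 2^J \<le> m0 * 2^(Suc J)" by simp
      have a: "m0 < x" if "m0 * 2^J < x" for x
      proof -
        have "m0 \<le> m0 * 2^J" by simp
        then show ?thesis using that by linarith
      qed
      show ?thesis
      proof (rule set_eqI)
        fix n
        show "n \<in> R (Suc J) \<longleftrightarrow> n \<in> R J \<union> Bl J"
        proof (cases "n \<le> m0 * 2^J")
          case True then show ?thesis using b unfolding R_def Bl_def by auto
        next
          case False then show ?thesis using a[of n] unfolding R_def Bl_def by auto
        qed
      qed
    qed
    have d: "R J \<inter> Bl J = {}" by (auto simp: R_def Bl_def)
    have fin: "finite (R J)" "finite (Bl J)" by (auto simp: R_def Bl_def)
    have "(\<Sum>n\<in>R (Suc J). f n) = (\<Sum>n\<in>R J. f n) + (\<Sum>n\<in>Bl J. f n)"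
      unfolding e by (rule sum.union_disjoint[OF fin d])
    then have "cmod (\<Sum>n\<in>R (Suc J). f n) \<le> cmod (\<Sum>n\<in>R J. f n) + cmod (\<Sum>n\<in>Bl J. f n)"
      by (simp add: norm_triangle_ineq)
    then show ?case using Suc blk[of J] by (simp add: algebra_simps)
  qed
  define K0 where "K0 = (LEAST k. N \<le> m0 * 2^k)"
  have ex: "\<exists>k. N \<le> m0 * 2^k"
  proof -
    have "N < 2^N" by (rule less_exp)
    also have "\<dots> \<le> m0 * 2^N" using m0p by simp
    finally show ?thesis by (intro exI[of _ N]) simp
  qed
  have K0a: "N \<le> m0 * 2^K0" unfolding K0_def using LeastI_ex[OF ex] .
  have K0b: "\<not> N \<le> m0 * 2^k" if "k < K0" for k using not_less_Least[OF that[unfolded K0_def]] by simp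
  have RK: "R K0 = {n. m0 < n \<and> n \<le> N}" using K0a by (auto simp: R_def)
  have split: "{1..N} = {1..min N m0} \<union> {n. m0 < n \<and> n \<le> N}" by auto
  have dsj: "{1..min N m0} \<inter> {n. m0 < n \<and> n \<le> N} = {}" by auto
  have "(\<Sum>n=1..N. f n) = (\<Sum>n=1..min N m0. f n) + (\<Sum>n\<in>{n. m0 < n \<and> n \<le> N}. f n)"
    unfolding split by (rule sum.union_disjoint) auto
  then have tot: "cmod (\<Sum>n=1..N. f n) \<le> 2 * sqrt (real m0) + real K0 * (5 * sqrt s)"
  proof -
    assume eq: "(\<Sum>n=1..N. f n) = (\<Sum>n=1..min N m0. f n) + (\<Sum>n\<in>{n. m0 < n \<and> n \<le> N}. f n)"
    have "cmod (\<Sum>n=1..min N m0. f n) \<le> 2 * sqrt (real (min N m0))" by (rule triv)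
    also have "\<dots> \<le> 2 * sqrt (real m0)" by simp
    finally have a: "cmod (\<Sum>n=1..min N m0. f n) \<le> 2 * sqrt (real m0)" .
    have b: "cmod (\<Sum>n\<in>{n. m0 < n \<and> n \<le> N}. f n) \<le> real K0 * (5 * sqrt s)"
      using Rb[of K0] RK by simp
    show ?thesis unfolding eq using a b norm_triangle_ineq
      by (smt (verit))
  qed
  define U where "U = tau powr (1/6)"
  have Up: "U > 0" using taup by (simp add: U_def)
  have sqs: "sqrt s = (2*pi) powr (1/6) * U"
  proof -
    have "sqrt s = s powr (1/2)" using sp by (simp add: powr_half_sqrt)
    also have "\<dots> = t powr (1/6)" using tp by (simp add: s_def powr_powr)
    also have "\<dots> = (2*pi) powr (1/6) * U" unfolding ttau U_def using taup
      by (simp add: powr_mult)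
    finally show ?thesis .
  qed
  have c6: "(2*pi) powr (1/6) \<le> 1.36"
  proof -
    have "((2*pi) powr (1/6))^6 = 2*pi" using powr_inv_pow[of "2*pi" 6] by simp
    also have "\<dots> \<le> (1.36::real)^6"
    proof -
      have e: "(1.36::real)^6 = 1544804416/244140625" by (simp add: power_divide)
      have p: "pi \<le> 63/20" using pi_approx(2) by simp
      show ?thesis unfolding e using p by linarith
    qed
    finally show ?thesis using power_mono_iff[of "(2*pi) powr (1/6)" "1.36::real" 6] by simp
  qed
  have sqsU: "sqrt s \<le> 1.36 * U" using sqs c6 Up by (simp add: mult_right_mono)
  have p1: "2 * sqrt (real m0) \<le> 16.125 * sqrt s"
  proof -
    have r: "sqrt 65 \<le> (8.0625::real)"
    proof (rule real_le_lsqrt)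
      show "0 \<le> (8.0625::real)" by simp
      have "(8.0625::real)^2 = 16641/256" by (simp add: power2_eq_square)
      then show "65 \<le> (8.0625::real)^2" by simp
    qed
    have "sqrt (real m0) \<le> sqrt (65 * s)" using m0u s0 by (intro real_sqrt_le_mono) linarith
    also have "\<dots> = sqrt 65 * sqrt s" by (simp add: real_sqrt_mult)
    also have "\<dots> \<le> 8.0625 * sqrt s" using r sp by (intro mult_right_mono) auto
    finally show ?thesis by simp
  qed
  have lt: "60 * ln 2 \<le> ln tau"
  proof -
    have "ln (2^60) \<le> ln tau" using tb taup by simp
    then show ?thesis using ln_realpow[of 2 60] by simp
  qed
  have l2: "2/3 \<le> ln (2::real)" by (rule ln2_ge)
  have lt40: "40 \<le> ln tau" using lt l2 by linarith
  have K0b2: "real K0 \<le> ln tau / 4 - 5" if nz: "K0 \<noteq> 0"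
  proof -
    have "\<not> N \<le> m0 * 2^(K0-1)" using K0b[of "K0-1"] that by simp
    then have lt1: "real (m0 * 2^(K0-1)) < sqrt tau" using N by linarith
    have s3: "tau powr (1/3) \<le> s"
      unfolding s_def ttau using taup pi_gt3 by (intro powr_mono2) auto
    have sqt: "sqrt tau = tau powr (1/3) * U"
      using taup by (simp add: U_def powr_half_sqrt[symmetric] powr_add[symmetric])
    have "64 * tau powr (1/3) * 2^(K0-1) \<le> real m0 * 2^(K0-1)"
      using s3 m0l by (intro mult_right_mono) auto
    also have "\<dots> < tau powr (1/3) * U" using lt1 sqt by simp
    finally have "64 * 2^(K0-1) < U" using taup by (simp add: mult.commute mult.left_commute)
    moreover have "(64::real) * 2^(K0-1) = 2^(K0+5)"
    proof -
      obtain k where k: "K0 = Suc k" using nz by (cases K0) auto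
      have "(2::real)^(Suc k + 5) = 2^k * 2^6"
      proof -
        have "Suc k + 5 = k + 6" by simp
        then show ?thesis by (simp only: power_add)
      qed
      then show ?thesis unfolding k by simp
    qed
    ultimately have "2^(K0+5) < U" by simp
    then have "ln (2^(K0+5)) < ln U" using Up by (subst ln_less_cancel_iff) auto
    then have "real (K0+5) * ln 2 < ln tau / 6" using taup by (simp add: ln_realpow U_def ln_powr)
    then have "real (K0+5) * (2/3) < ln tau / 6" using l2
      by (smt (verit) mult_left_mono of_nat_0_le_iff)
    then show ?thesis by simp
  qed
  have "cmod (\<Sum>n=1..N. f n) \<le> 1.89725 * U * ln tau + 9.89044 * U"
  proof (cases "K0 = 0")
    case True
    have "cmod (\<Sum>n=1..N. f n) \<le> 16.125 * (1.36 * U)" using tot True p1 sqsU by simp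
    also have "\<dots> \<le> 1.89725 * U * ln tau + 9.89044 * U"
    proof -
      have "16.125 * 1.36 \<le> 1.89725 * ln tau + (9.89044::real)" using lt40 by simp
      then have "U * (16.125 * 1.36) \<le> U * (1.89725 * ln tau + 9.89044)" using Up by (intro mult_left_mono) auto
      then show ?thesis by (simp add: algebra_simps)
    qed
    finally show ?thesis .
  next
    case False
    have kk: "real K0 \<le> ln tau / 4 - 5" by (rule K0b2[OF False])
    have "cmod (\<Sum>n=1..N. f n) \<le> 16.125 * sqrt s + real K0 * (5 * sqrt s)" using tot p1 by simp
    also have "\<dots> = (16.125 + 5 * real K0) * sqrt s" by (simp add: algebra_simps)
    also have "\<dots> \<le> (16.125 + 5 * real K0) * (1.36 * U)" using sqsU by (intro mult_left_mono) auto
    also have "\<dots> \<le> (16.125 + 5 * (ln tau / 4 - 5)) * (1.36 * U)"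
      using kk Up by (intro mult_right_mono) auto
    also have "\<dots> \<le> 1.89725 * U * ln tau + 9.89044 * U"
    proof -
      have "(16.125 + 5 * (ln tau / 4 - 5)) * 1.36 \<le> 1.89725 * ln tau + (9.89044::real)" using lt40 by simp
      then have "U * ((16.125 + 5 * (ln tau / 4 - 5)) * 1.36) \<le> U * (1.89725 * ln tau + 9.89044)" using Up by (intro mult_left_mono) auto
      then show ?thesis by (simp add: algebra_simps)
    qed
    finally show ?thesis .
  qed
  then show ?thesis by (simp add: f_def U_def)
qed

theorem proposition23:
  fixes t :: real
  assumes "t > 0"
    and "t / (2 * pi) \<ge> 648"
  shows "cmod (\<Sum>n\<in>{n::nat. 1 \<le> n \<and> real n \<le> (t / (2 * pi)) powr (1/2)}.
            1 / (of_nat n powr (Complex (1/2) t)))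
         \<le> 1.89725 * (t / (2 * pi)) powr (1/6) * ln (t / (2 * pi))
           + 9.89044 * (t / (2 * pi)) powr (1/6)"
proof -
  define tau where "tau = t / (2 * pi)"
  have tau0: "648 \<le> tau" using assms(2) by (simp add: tau_def)
  have taup: "0 < tau" using tau0 by simp
  define N where "N = nat \<lfloor>sqrt tau\<rfloor>"
  have Nle: "real N \<le> sqrt tau"
  proof -
    have "0 \<le> sqrt tau" using taup by simp
    then have "real N = of_int \<lfloor>sqrt tau\<rfloor>" by (simp add: N_def)
    then show ?thesis by linarith
  qed
  have pw: "(t / (2 * pi)) powr (1/2) = sqrt tau" using taup by (simp add: tau_def powr_half_sqrt)
  have setN: "{n::nat. 1 \<le> n \<and> real n \<le> (t / (2 * pi)) powr (1/2)} = {1..N}"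
  proof (rule set_eqI)
    fix n :: nat
    show "n \<in> {n::nat. 1 \<le> n \<and> real n \<le> (t / (2 * pi)) powr (1/2)} \<longleftrightarrow> n \<in> {1..N}"
    proof
      assume "n \<in> {n::nat. 1 \<le> n \<and> real n \<le> (t / (2 * pi)) powr (1/2)}"
      then have "1 \<le> n" "real n \<le> sqrt tau" using pw by auto
      then show "n \<in> {1..N}" unfolding N_def using le_nat_floor by auto
    next
      assume "n \<in> {1..N}"
      then have "1 \<le> n" "real n \<le> real N" by auto
      then show "n \<in> {n::nat. 1 \<le> n \<and> real n \<le> (t / (2 * pi)) powr (1/2)}" using Nle pw by auto
    qed
  qed
  define f where "f n = complex_of_real (1 / sqrt (real n)) * cis (- t * ln (real n))" for n
  have sumeq: "(\<Sum>n\<in>{n::nat. 1 \<le> n \<and> real n \<le> (t / (2 * pi)) powr (1/2)}. 1 / (of_nat n powr (Complex (1/2) t)))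
      = (\<Sum>n=1..N. f n)"
    unfolding setN f_def by (intro sum.cong refl term_eq) auto
  have goal: "cmod (\<Sum>n=1..N. f n) \<le> 1.89725 * tau powr (1/6) * ln tau + 9.89044 * tau powr (1/6)"
  proof (cases "tau \<le> 2^60")
    case True
    have fn: "cmod (f n) = 1 / sqrt (real n)" for n
      unfolding f_def by (simp only: norm_mult norm_cis norm_of_real mult_1_right) simp
    have "cmod (\<Sum>n=1..N. f n) \<le> (\<Sum>n=1..N. cmod (f n))" by (rule norm_sum)
    also have "\<dots> = (\<Sum>n=1..N. 1 / sqrt (real n))" by (simp add: fn)
    also have "\<dots> \<le> 2 * sqrt (real N)" by (rule trivial_sum)
    also have "\<dots> \<le> 2 * sqrt (sqrt tau)" using Nle by simp
    also have "\<dots> \<le> 1.89725 * tau powr (1/6) * ln tau + 9.89044 * tau powr (1/6)"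
      by (rule small_case[OF tau0 True])
    finally show ?thesis .
  next
    case False
    then have "2^60 < tau" by simp
    then show ?thesis unfolding f_def tau_def
      by (rule big_case[OF assms(1)]) (use Nle in \<open>simp add: tau_def\<close>)
  qed
  show ?thesis unfolding sumeq using goal by (simp add: tau_def)
qed

end
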